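(* The function $\widetilde{M_f}$ defined in the context satisfies $\lim_{r\to+\infty}\widetilde{M_f}(r)=-\infty$.
   Context: For $r>\frac23$ let $u_b(r)\in(\frac65,\frac43)$ be the unique $u\in(\frac65,\frac43)$ with $2-u+2q(1-u)=0$ at $q=1+\sqrt{\frac{r+u-2}{r+0.1}}$. Set $q_{f,\pm}(r)=1\pm\sqrt{\frac{r}{r+0.1}}$, $q_{b,\pm}(r)=1\pm\sqrt{\frac{r+u_b(r)-2}{r+0.1}}$, $S(r)=(q_{f,+}-2q_{f,-})+(q_{b,+}-2q_{b,-})$ and $D_0(r)=\frac{2(2-u_b(r))^2}{(r+0.1)S(r)^2}$ (equivalently, $D_0(r)>0$ together with some $\mu_0(r)$ solves $2+\mu=\frac12\sqrt{2D(r+0.1)}(q_{f,+}-2q_{f,-})$ and $u_b+\mu=-\frac12\sqrt{2D(r+0.1)}(q_{b,+}-2q_{b,-})$). Let $\phi(\chi)=(1+e^{-\frac{\sqrt2}{2}\chi})^{-1}$, $\kappa_f(r)=\frac12-\frac{q_{f,-}(r)}{q_{f,+}(r)}$ and $$\widetilde{M_f}(r)=-q_{f,+}(r)\sqrt{\frac{r+0.1}{D_0(r)}}\int_{-\infty}^{\infty}e^{-\sqrt2\kappa_f(r)\chi}\phi'(\chi)^2d\chi+\int_{-\infty}^{\infty}e^{-\sqrt2\kappa_f(r)\chi}\phi'(\chi)\phi(\chi)d\chi .$$ *)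

theory Defs
  imports "HOL-Analysis.Analysis"
begin

definition qb_of :: "real \<Rightarrow> real \<Rightarrow> real" where
  "qb_of r u = 1 + sqrt ((r + u - 2) / (r + 0.1))"

definition u_b :: "real \<Rightarrow> real" where
  "u_b r = (THE u. u \<in> {6/5<..<4/3} \<and> 2 - u + 2 * qb_of r u * (1 - u) = 0)"

definition q_fp :: "real \<Rightarrow> real" where
  "q_fp r = 1 + sqrt (r / (r + 0.1))"

definition q_fm :: "real \<Rightarrow> real" where
  "q_fm r = 1 - sqrt (r / (r + 0.1))"

definition q_bp :: "real \<Rightarrow> real" where
  "q_bp r = 1 + sqrt ((r + u_b r - 2) / (r + 0.1))"

definition q_bm :: "real \<Rightarrow> real" where
  "q_bm r = 1 - sqrt ((r + u_b r - 2) / (r + 0.1))"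

definition S_fun :: "real \<Rightarrow> real" where
  "S_fun r = (q_fp r - 2 * q_fm r) + (q_bp r - 2 * q_bm r)"

definition D0 :: "real \<Rightarrow> real" where
  "D0 r = 2 * (2 - u_b r)^2 / ((r + 0.1) * (S_fun r)^2)"

definition phi :: "real \<Rightarrow> real" where
  "phi x = 1 / (1 + exp (- (sqrt 2 / 2) * x))"

definition kappa_f :: "real \<Rightarrow> real" where
  "kappa_f r = 1/2 - q_fm r / q_fp r"

definition Mf_tilde :: "real \<Rightarrow> real" where
  "Mf_tilde r =
     - q_fp r * sqrt ((r + 0.1) / D0 r) *
         integral UNIV (\<lambda>x. exp (- sqrt 2 * kappa_f r * x) * (deriv phi x)^2)
     + integral UNIV (\<lambda>x. exp (- sqrt 2 * kappa_f r * x) * deriv phi x * phi x)"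

end

theory Submission
  imports Defs
begin

lemma g_int:
  fixes a :: real assumes a: "a > 0"
  shows "(\<lambda>x. exp (- a * \<bar>x\<bar>)) integrable_on UNIV"
proof -
  have p: "(\<lambda>x. exp (- a * x)) integrable_on {0..}"
    using integrable_on_exp_minus_to_infinity[OF a, of 0] by simp
  have pa: "(\<lambda>x. exp (- a * x)) absolutely_integrable_on {0..}"
    by (rule nonnegative_absolutely_integrable_1[OF p]) auto
  have "(\<lambda>x. exp (- a * (- x))) absolutely_integrable_on {..0}"
  proof -
    have s1: "uminus ` {..0::real} \<subseteq> {0..}" by auto
    have s2: "uminus ` {(0::real)..} \<subseteq> {..0}" by auto
    show ?thesis
      using has_absolute_integral_reflect_real[OF s1 s2, of "\<lambda>x. exp (- a * x)"
        "integral {0..} (\<lambda>x. exp (- a * x))"] pa by simp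
  qed
  then have n: "(\<lambda>x. exp (- a * (- x))) integrable_on {..0}"
    using set_lebesgue_integral_eq_integral(1) by blast
  have p': "(\<lambda>x. exp (- a * \<bar>x\<bar>)) integrable_on {0..}"
    using p by (rule integrable_eq) auto
  have n': "(\<lambda>x. exp (- a * \<bar>x\<bar>)) integrable_on {..0}"
    using n by (rule integrable_eq) auto
  have ng: "negligible ({..0} \<inter> {0::real..})"
  proof -
    have "{..0} \<inter> {0::real..} = {0}" by auto
    then show ?thesis by simp
  qed
  have "(\<lambda>x. exp (- a * \<bar>x\<bar>)) integrable_on ({..0} \<union> {0..})"
    using has_integral_Un[OF integrable_integral[OF n'] integrable_integral[OF p'] ng]
    unfolding integrable_on_def by blast
  moreover have "{..0} \<union> {0..} = (UNIV::real set)" by auto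
  ultimately show ?thesis by simp
qed

lemma nz: "1 + exp y \<noteq> (0::real)" by (smt (verit) exp_gt_zero)

lemma phi_alt: "phi x = 1 / (1 + exp (- (sqrt 2 / 2) * x))" by (simp add: phi_def)

lemma phi_deriv: "deriv phi x = sqrt 2 / 2 * phi x * (1 - phi x)"
proof -
  define E where "E = exp (- (sqrt 2 / 2) * x)"
  have E: "E > 0" by (simp add: E_def)
  have "(phi has_real_derivative (sqrt 2 / 2 * E / (1 + E)^2)) (at x)"
    unfolding phi_def[abs_def] E_def
    by (rule derivative_eq_intros refl | simp add: nz)+
       (simp add: nz power2_eq_square)
  then have "deriv phi x = sqrt 2 / 2 * E / (1 + E)^2" by (rule DERIV_imp_deriv)
  also have "\<dots> = sqrt 2 / 2 * phi x * (1 - phi x)"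
  proof -
    have p: "phi x = 1 / (1 + E)" by (simp add: phi_def E_def)
    show ?thesis using E unfolding p by (simp add: field_simps power2_eq_square)
  qed
  finally show ?thesis .
qed

lemma phi_cont: "continuous_on UNIV phi"
  unfolding phi_def[abs_def]
  by (intro continuous_intros) (auto simp: nz)

lemma u_b_bounds:
  assumes r: "r \<ge> 2"
  shows "6/5 < u_b r \<and> u_b r < 4/3"
proof -
  define s where "s u = sqrt ((r + u - 2) / (r + 0.1))" for u
  define f where "f u = 2 - u + 2 * qb_of r u * (1 - u)" for u
  have fs: "f u = 4 - 3*u + 2 * s u * (1 - u)" for u
    by (simp add: f_def s_def qb_of_def algebra_simps)
  have s0: "0 < s u" if "u > 6/5" for u
    using r that unfolding s_def by (intro real_sqrt_gt_zero divide_pos_pos) auto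
  have s1: "s u < 1" if "u < 4/3" for u
  proof -
    have "(r + u - 2) / (r + 0.1) < 1" using r that by (simp add: divide_less_eq)
    then show ?thesis unfolding s_def by (metis real_sqrt_less_iff real_sqrt_one)
  qed
  have smono: "s u \<le> s v" if "u \<le> v" for u v
    unfolding s_def using r that by (intro real_sqrt_le_mono divide_right_mono) auto
  have cont: "continuous_on {6/5..4/3} f"
    unfolding f_def qb_of_def using r by (intro continuous_intros) auto
  have fa: "f (6/5) \<ge> 0"
  proof -
    have "s (6/5) \<le> 1" using s1[of "6/5"] by simp
    then show ?thesis unfolding fs by simp
  qed
  have fb: "f (4/3) \<le> 0"
  proof -
    have "s (4/3) \<ge> 0" using s0[of "4/3"] by simp
    then show ?thesis unfolding fs by simp
  qed
  obtain u where u: "u \<ge> 6/5" "u \<le> 4/3" "f u = 0"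
    using IVT2'[of f "4/3" 0 "6/5", OF fb fa _ cont] by auto
  have u1: "u \<noteq> 6/5"
  proof
    assume h: "u = 6/5"
    have "f (6/5) > 0" unfolding fs using s1[of "6/5"] by simp
    with u h show False by simp
  qed
  have u2: "u \<noteq> 4/3"
  proof
    assume h: "u = 4/3"
    have "f (4/3) < 0" unfolding fs using s0[of "4/3"] by simp
    with u h show False by simp
  qed
  have uin: "u \<in> {6/5<..<4/3}" using u u1 u2 by auto
  have strict: "f v < f w" if "6/5 < w" "w < v" "v < 4/3" for v w
  proof -
    have "s w \<le> s v" using smono that by simp
    have sv: "s v > 0" using s0 that by simp
    have "f w - f v = 3*(v-w) + 2*((s v - s w)*(w-1)) + 2*(s v * (v-w))"
      unfolding fs by (simp add: algebra_simps)
    moreover have "(s v - s w)*(w-1) \<ge> 0" using \<open>s w \<le> s v\<close> that by simp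
    moreover have "s v * (v-w) \<ge> 0" using sv that by simp
    ultimately have "f w - f v > 0" using that
      by (metis (no_types, lifting) add_nonneg_nonneg add_pos_nonneg diff_gt_0_iff_gt
          mult_nonneg_nonneg mult_pos_pos zero_less_numeral zero_le_numeral)
    then show ?thesis by simp
  qed
  have ex1: "\<exists>!v. v \<in> {6/5<..<4/3} \<and> 2 - v + 2 * qb_of r v * (1 - v) = 0"
  proof (rule ex1I[of _ u])
    show "u \<in> {6/5<..<4/3} \<and> 2 - u + 2 * qb_of r u * (1 - u) = 0"
      using uin u(3) by (simp add: f_def)
  next
    fix v assume v: "v \<in> {6/5<..<4/3} \<and> 2 - v + 2 * qb_of r v * (1 - v) = 0"
    then have fv: "f v = 0" by (simp add: f_def)
    show "v = u"
    proof (rule linorder_cases[of v u])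
      assume "v < u" then have "f u < f v" using strict[of v u] uin v by auto
      then show ?thesis using fv u by simp
    next
      assume "u < v" then have "f v < f u" using strict[of u v] uin v by auto
      then show ?thesis using fv u by simp
    qed
  qed
  have "u_b r = u" unfolding u_b_def
    by (rule the1_equality[OF ex1]) (use uin u(3) in \<open>simp add: f_def\<close>)
  then show ?thesis using uin by simp
qed

definition F1 :: "real \<Rightarrow> real \<Rightarrow> real" where
  "F1 k x = exp (- sqrt 2 * k * x) * (deriv phi x)^2"
definition F2 :: "real \<Rightarrow> real \<Rightarrow> real" where
  "F2 k x = exp (- sqrt 2 * k * x) * deriv phi x * phi x"

lemma sqrt2_half: "sqrt 2 / 2 \<le> (1::real)" "0 < sqrt 2 / (2::real)"
proof -
  have "sqrt 2 \<le> sqrt (4::real)" by (rule real_sqrt_le_mono) simp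
  then show "sqrt 2 / 2 \<le> (1::real)" by simp
  show "0 < sqrt 2 / (2::real)" by simp
qed

lemma F_bounds:
  assumes k: "0 \<le> k" "k \<le> 1/2"
  shows "\<bar>F1 k x\<bar> \<le> exp (- (sqrt 2 / 2) * \<bar>x\<bar>)" "\<bar>F2 k x\<bar> \<le> exp (- (sqrt 2 / 2) * \<bar>x\<bar>)"
proof -
  define a where "a = sqrt 2 / 2"
  define E where "E = exp (- a * x)"
  define p where "p = phi x"
  define q where "q = 1 - p"
  define e where "e = exp (- sqrt 2 * k * x)"
  have a: "0 < a" "a \<le> 1" using sqrt2_half by (auto simp: a_def)
  have E: "E > 0" by (simp add: E_def)
  have pE: "p = 1 / (1 + E)" by (simp add: p_def phi_def E_def a_def)
  have qE: "q = E / (1 + E)" using E by (simp add: q_def pE field_simps)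
  have p: "0 < p" "p < 1" using E by (auto simp: pE)
  have q: "0 < q" "q < 1" using p by (auto simp: q_def)
  have e: "e > 0" by (simp add: e_def)
  have dp: "deriv phi x = a * p * q" by (simp add: phi_deriv a_def p_def q_def)
  have f1: "F1 k x = e * (a*p*q)^2" by (simp add: F1_def e_def dp)
  have f2: "F2 k x = e * (a*p*q) * p" by (simp add: F2_def e_def dp p_def)
  have nn: "0 \<le> e * (a*p*q)^2" "0 \<le> e * (a*p*q) * p" using e a p q by auto
  have "F1 k x \<le> exp (- a * \<bar>x\<bar>) \<and> F2 k x \<le> exp (- a * \<bar>x\<bar>)"
  proof (cases "x \<ge> 0")
    case True
    have e1: "e \<le> 1" unfolding e_def using True k by simp
    have qle: "q \<le> E" using E by (simp add: qE divide_le_eq)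
    have Eabs: "E = exp (- a * \<bar>x\<bar>)" using True by (simp add: E_def)
    have ea: "e * a \<le> 1" by (rule mult_le_one) (use e1 a in auto)
    have eap: "e * a * p \<le> 1" by (rule mult_le_one[OF ea]) (use p in auto)
    have c1: "e * a * p * p \<le> 1" by (rule mult_le_one[OF eap]) (use p in auto)
    have eaa: "e * a * a \<le> 1" by (rule mult_le_one[OF ea]) (use a in auto)
    have eaap: "e * a * a * p \<le> 1" by (rule mult_le_one[OF eaa]) (use p in auto)
    have eaapp: "e * a * a * p * p \<le> 1" by (rule mult_le_one[OF eaap]) (use p in auto)
    have c2: "e * a * a * p * p * q \<le> 1" by (rule mult_le_one[OF eaapp]) (use q in auto)
    have "e * (a*p*q) * p = (e * a * p * p) * q" by (simp add: algebra_simps)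
    also have "\<dots> \<le> 1 * q" using c1 q by (intro mult_right_mono) auto
    finally have A: "e * (a*p*q) * p \<le> E" using qle by simp
    have "e * (a*p*q)^2 = (e * a * a * p * p * q) * q" by (simp add: algebra_simps power2_eq_square)
    also have "\<dots> \<le> 1 * q" using c2 q by (intro mult_right_mono) auto
    finally have B: "e * (a*p*q)^2 \<le> E" using qle by simp
    show ?thesis using A B f1 f2 Eabs by simp
  next
    case False
    have eE: "e \<le> E" unfolding e_def E_def a_def using False k
      by (simp add: mult_le_cancel_right)
    have Ep: "E * p \<le> 1" using E by (simp add: pE)
    have pexp: "p \<le> exp (- a * \<bar>x\<bar>)"
    proof -
      have "exp (- a * \<bar>x\<bar>) = 1 / E" using False by (simp add: E_def exp_minus field_simps)
      then show ?thesis using Ep E by (simp add: le_divide_eq mult.commute)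
    qed
    have aq: "a * q \<le> 1" by (rule mult_le_one) (use a q in auto)
    have "e * (a*p*q) * p = e * (a*q) * p * p" by (simp add: algebra_simps)
    also have "\<dots> \<le> E * 1 * p * p"
    proof -
      have "e * (a*q) \<le> E * 1" by (rule mult_mono) (use eE aq a q e E in auto)
      then show ?thesis using p by (intro mult_right_mono) auto
    qed
    also have "\<dots> = (E * p) * p" by simp
    also have "\<dots> \<le> 1 * p" using Ep p by (intro mult_right_mono) auto
    finally have A: "e * (a*p*q) * p \<le> exp (- a * \<bar>x\<bar>)" using pexp by simp
    have aa1: "a * a \<le> 1" by (rule mult_le_one) (use a in auto)
    have aaq: "a * a * q \<le> 1" by (rule mult_le_one[OF aa1]) (use q in auto)
    have aq2: "a * a * q * q \<le> 1" by (rule mult_le_one[OF aaq]) (use q in auto)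
    have "e * (a*p*q)^2 = e * (a*a*q*q) * p * p" by (simp add: algebra_simps power2_eq_square)
    also have "\<dots> \<le> E * 1 * p * p"
    proof -
      have "e * (a*a*q*q) \<le> E * 1" by (rule mult_mono) (use eE aq2 a q e E in auto)
      then show ?thesis using p by (intro mult_right_mono) auto
    qed
    also have "\<dots> = (E * p) * p" by simp
    also have "\<dots> \<le> 1 * p" using Ep p by (intro mult_right_mono) auto
    finally have B: "e * (a*p*q)^2 \<le> exp (- a * \<bar>x\<bar>)" using pexp by simp
    show ?thesis using A B f1 f2 by simp
  qed
  then show "\<bar>F1 k x\<bar> \<le> exp (- (sqrt 2 / 2) * \<bar>x\<bar>)" "\<bar>F2 k x\<bar> \<le> exp (- (sqrt 2 / 2) * \<bar>x\<bar>)"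
    using nn f1 f2 by (auto simp: a_def)
qed

lemma F_cont: "continuous_on UNIV (F1 k)" "continuous_on UNIV (F2 k)"
proof -
  have d: "deriv phi = (\<lambda>x. sqrt 2 / 2 * phi x * (1 - phi x))" by (rule ext) (rule phi_deriv)
  show "continuous_on UNIV (F1 k)" unfolding F1_def[abs_def] d
    by (intro continuous_intros phi_cont)
  show "continuous_on UNIV (F2 k)" unfolding F2_def[abs_def] d
    by (intro continuous_intros phi_cont)
qed

lemma F_int:
  assumes k: "0 \<le> k" "k \<le> 1/2"
  shows "F1 k integrable_on UNIV" "F2 k integrable_on UNIV"
proof -
  have g: "(\<lambda>x. exp (- (sqrt 2 / 2) * \<bar>x\<bar>)) integrable_on UNIV"
    by (rule g_int[OF sqrt2_half(2)])
  show "F1 k integrable_on UNIV"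
    by (rule measurable_bounded_by_integrable_imp_integrable_real[OF
          continuous_imp_measurable_on_sets_lebesgue[OF F_cont(1)] g F_bounds(1)[OF k]]) simp_all
  show "F2 k integrable_on UNIV"
    by (rule measurable_bounded_by_integrable_imp_integrable_real[OF
          continuous_imp_measurable_on_sets_lebesgue[OF F_cont(2)] g F_bounds(2)[OF k]]) simp_all
qed

definition G :: real where "G = integral UNIV (\<lambda>x. exp (- (sqrt 2 / 2) * \<bar>x\<bar>))"

lemma I2_bound:
  assumes k: "0 \<le> k" "k \<le> 1/2"
  shows "integral UNIV (F2 k) \<le> G"
  unfolding G_def
  by (rule integral_le[OF F_int(2)[OF k] g_int[OF sqrt2_half(2)]])
     (use F_bounds(2)[OF k] in \<open>simp add: abs_le_iff\<close>)

lemma I1_bound: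
  assumes k: "0 \<le> k" "k \<le> 1/2"
  shows "integral UNIV (F1 k) \<ge> 1/128"
proof -
  have lb: "F1 k x \<ge> 1/128" if x: "x \<in> {-1..0}" for x
  proof -
    define a where "a = sqrt 2 / 2"
    define E where "E = exp (- a * x)"
    define p where "p = phi x"
    define e where "e = exp (- sqrt 2 * k * x)"
    have a: "0 < a" "a \<le> 1" using sqrt2_half by (auto simp: a_def)
    have aa: "a * a = 1/2" by (simp add: a_def)
    have "a * x \<le> 0" using x a by (simp add: mult_nonneg_nonpos)
    then have E1: "E \<ge> 1" by (simp add: E_def)
    have "a * (-x) \<le> 1 * 1" using x a by (intro mult_mono) auto
    then have "E \<le> exp 1" unfolding E_def by simp
    then have E3: "E \<le> 3" using exp_le by simp
    have pE: "p = 1 / (1 + E)" by (simp add: p_def phi_def E_def a_def)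
    have p1: "p \<ge> 1/4" using E3 E1 by (simp add: pE divide_simps)
    have q1: "1 - p \<ge> 1/2" using E1 by (simp add: pE divide_simps)
    have e1: "e \<ge> 1" unfolding e_def using x k by (simp add: mult_nonneg_nonpos)
    have dp: "deriv phi x = a * p * (1 - p)" by (simp add: phi_deriv a_def p_def)
    have "F1 k x = e * ((a * a) * (p * p) * ((1-p) * (1-p)))"
      by (simp add: F1_def e_def dp power2_eq_square algebra_simps)
    also have "\<dots> = e * ((1/2) * (p * p) * ((1-p) * (1-p)))" by (simp only: aa)
    finally have F: "F1 k x = e * ((1/2) * (p * p) * ((1-p) * (1-p)))" .
    have pp: "p * p \<ge> (1/4) * (1/4)" using p1 by (intro mult_mono) auto
    have qq: "(1-p) * (1-p) \<ge> (1/2) * (1/2)" using q1 by (intro mult_mono) auto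
    have X: "(p * p) * ((1-p) * (1-p)) \<ge> ((1/4) * (1/4)) * ((1/2) * (1/2))"
      by (rule mult_mono[OF pp qq]) auto
    then have X': "(1/2) * (p * p) * ((1-p) * (1-p)) \<ge> 1/128" by simp
    have "e * ((1/2) * (p * p) * ((1-p) * (1-p))) \<ge> 1 * ((1/2) * (p * p) * ((1-p) * (1-p)))"
      using e1 X' by (intro mult_right_mono) auto
    then show ?thesis using F X' by simp
  qed
  have i01: "F1 k integrable_on {-1..0}"
    by (rule integrable_on_subinterval[OF F_int(1)[OF k]]) auto
  have "1/128 = integral {-1..(0::real)} (\<lambda>x. 1/128)" by simp
  also have "\<dots> \<le> integral {-1..0} (F1 k)"
    using lb by (intro integral_le i01) auto
  also have "\<dots> \<le> integral UNIV (F1 k)"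
  proof (rule integral_subset_le[OF _ i01 F_int(1)[OF k]])
    show "\<forall>x\<in>UNIV. 0 \<le> F1 k x" by (simp add: F1_def)
  qed auto
  finally show ?thesis .
qed

theorem theorem4:
  shows "filterlim Mf_tilde at_bot at_top"
proof -
  have key: "Mf_tilde r \<le> G - (r + 0.1) / 256" if r: "r \<ge> 2" for r
  proof -
    define s where "s = sqrt (r / (r + 0.1))"
    define t where "t = sqrt ((r + u_b r - 2) / (r + 0.1))"
    define k where "k = kappa_f r"
    have ub: "6/5 < u_b r" "u_b r < 4/3" using u_b_bounds[OF r] by auto
    have "(1/2)^2 \<le> r / (r + 0.1)" using r by (simp add: field_simps)
    then have s2: "s \<ge> 1/2" unfolding s_def by (rule real_le_rsqrt)
    have "(1/2)^2 \<le> (r + u_b r - 2) / (r + 0.1)" using r ub by (simp add: field_simps)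
    then have t2: "t \<ge> 1/2" unfolding t_def by (rule real_le_rsqrt)
    have qfp: "q_fp r = 1 + s" "q_fm r = 1 - s" by (simp_all add: q_fp_def q_fm_def s_def)
    have qbp: "q_bp r = 1 + t" "q_bm r = 1 - t" by (simp_all add: q_bp_def q_bm_def t_def)
    have S: "S_fun r = 3 * s + 3 * t - 2" by (simp add: S_fun_def qfp qbp)
    have S1: "S_fun r \<ge> 1" using S s2 t2 by simp
    have S2: "(S_fun r)^2 \<ge> 1" using S1 by (simp add: one_le_power)
    have u2: "(2 - u_b r)^2 \<le> 1" "(2 - u_b r)^2 > 0" using ub
      by (auto simp: power2_eq_square intro!: mult_le_one)
    have rp: "r + 0.1 > 0" using r by simp
    have D0: "D0 r = 2 * (2 - u_b r)^2 / ((r + 0.1) * (S_fun r)^2)" by (simp add: D0_def)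
    have Dpos: "D0 r > 0" unfolding D0 using u2 rp S2 by (intro divide_pos_pos mult_pos_pos) auto
    have "D0 r \<le> 2 * 1 / ((r + 0.1) * 1)" unfolding D0 using u2 rp S2
      by (intro frac_le mult_left_mono mult_mono) auto
    then have Dle: "D0 r \<le> 2 / (r + 0.1)" by simp
    have "((r + 0.1) / 2)^2 \<le> (r + 0.1) / D0 r"
    proof -
      have "(r + 0.1) / (2 / (r + 0.1)) \<le> (r + 0.1) / D0 r"
        using Dle Dpos rp by (intro divide_left_mono) auto
      moreover have "((r + 0.1) / 2)^2 \<le> (r + 0.1) / (2 / (r + 0.1))"
        using rp r by (simp add: power2_eq_square field_simps)
      ultimately show ?thesis by linarith
    qed
    then have Q: "sqrt ((r + 0.1) / D0 r) \<ge> (r + 0.1) / 2" by (rule real_le_rsqrt)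
    have s1: "s \<le> 1" unfolding s_def using rp
      by (metis divide_le_eq_1 less_add_same_cancel1 order_less_imp_le real_sqrt_le_1_iff zero_less_divide_1_iff zero_less_numeral)
    have k0: "0 \<le> k" unfolding k_def kappa_f_def qfp using s2 by (simp add: field_simps)
    have k1: "k \<le> 1/2" unfolding k_def kappa_f_def qfp using s2 s1 by simp
    have M: "Mf_tilde r = - q_fp r * sqrt ((r + 0.1) / D0 r) * integral UNIV (F1 k)
                          + integral UNIV (F2 k)"
      by (simp add: Mf_tilde_def F1_def[abs_def] F2_def[abs_def] k_def)
    have sq0: "0 \<le> sqrt ((r + 0.1) / D0 r)" using rp Dpos by simp
    have P0: "0 \<le> (1 + s) * sqrt ((r + 0.1) / D0 r)" using sq0 s2 by simp
    define P where "P = q_fp r * sqrt ((r + 0.1) / D0 r) * integral UNIV (F1 k)"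
    have "P \<ge> 1 * ((r + 0.1) / 2) * (1/128)"
      unfolding P_def using I1_bound[OF k0 k1] Q s2 rp P0 unfolding qfp
      by (intro mult_mono) auto
    then have Pge: "P \<ge> (r + 0.1) / 256" by simp
    have M': "Mf_tilde r = - P + integral UNIV (F2 k)" unfolding P_def M by simp
    show ?thesis using Pge M' I2_bound[OF k0 k1] by linarith
  qed
  show ?thesis
    unfolding filterlim_at_bot
  proof
    fix Z :: real
    show "eventually (\<lambda>r. Mf_tilde r \<le> Z) at_top"
      unfolding eventually_at_top_linorder
    proof (intro exI allI impI)
      fix r assume "r \<ge> max 2 (256 * (G - Z))"
      then have r2: "r \<ge> 2" and rZ: "r \<ge> 256 * (G - Z)" by auto
      show "Mf_tilde r \<le> Z" using key[OF r2] rZ by (smt (verit) | (simp add: field_simps) | argo)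
    qed
  qed
qed

end
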